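(* Let $0<\alpha<1$. Let $(x(t))_{t\ge 0}$ be a sequence of nonnegative reals (the measured transmission attempt rates of a station) and $(\bar{x}(t))_{t\ge0}$ a sequence of positive reals (the estimated maximum fair attempt rate). Define $p(0)=0$ and, for $t\ge 0$, $$p(t+1)=\max\Big(0,\; p(t)+\alpha\Big(\tfrac{x(t)}{\bar{x}(t)}-1\Big)\Big),\qquad P_{NACK}(t)=\min\{p(t),1\}.$$ Suppose there is a constant $c$ with $0<c<1$ such that $x(t)/\bar{x}(t)\le 1-c\,P_{NACK}(t)$ for all $t>0$. Then $\lim_{t\to\infty}p(t)=0$.
   Context: This is the penalty update of an access-point policing algorithm: $p(t)$ is the accumulated penalty of the station at step $t$ and $P_{NACK}(t)$ is the probability with which the access point suppresses acknowledgements of that station's frames at step $t$. The conclusion means that for such (well-behaved) stations the policing algorithm eventually drops no acknowledgements. *)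

theory Defs
  imports Complex_Main
begin

primrec penalty :: "real \<Rightarrow> (nat \<Rightarrow> real) \<Rightarrow> (nat \<Rightarrow> real) \<Rightarrow> nat \<Rightarrow> real" where
  "penalty \<alpha> x xbar 0 = 0"
| "penalty \<alpha> x xbar (Suc t) = max 0 (penalty \<alpha> x xbar t + \<alpha> * (x t / xbar t - 1))"

definition P_NACK :: "real \<Rightarrow> (nat \<Rightarrow> real) \<Rightarrow> (nat \<Rightarrow> real) \<Rightarrow> nat \<Rightarrow> real" where
  "P_NACK \<alpha> x xbar t = min (penalty \<alpha> x xbar t) 1"

end

theory Submission
  imports Defs
begin

theorem theorem1:
  fixes \<alpha> c :: real and x xbar :: "nat \<Rightarrow> real"
  assumes "0 < \<alpha>" and "\<alpha> < 1"
    and "\<And>t. 0 \<le> x t"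
    and "\<And>t. 0 < xbar t"
    and "0 < c" and "c < 1"
    and "\<And>t. t > 0 \<Longrightarrow> x t / xbar t \<le> 1 - c * P_NACK \<alpha> x xbar t"
  shows "penalty \<alpha> x xbar \<longlonglongrightarrow> 0"
proof -
  define p where "p = penalty \<alpha> x xbar"
  define g where "g = (\<lambda>y::real. max 0 (y - \<alpha> * c * min y 1))"
  have nn: "0 \<le> p t" for t unfolding p_def by (cases t) auto
  have step: "p (Suc t) \<le> g (p t)" if "t > 0" for t
  proof -
    have "x t / xbar t \<le> 1 - c * min (p t) 1" using assms(7)[OF that] by (simp add: P_NACK_def p_def)
    hence "\<alpha> * (x t / xbar t - 1) \<le> \<alpha> * (- c * min (p t) 1)"
      using assms(1) by (intro mult_left_mono) auto
    thus ?thesis unfolding g_def p_def by (auto simp: algebra_simps)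
  qed
  have gle: "g y \<le> y" if "0 \<le> y" for y
    using that assms(1,5) unfolding g_def by (auto intro!: mult_nonneg_nonneg)
  define f where "f n = p (Suc n)" for n
  have dec: "decseq f" unfolding decseq_Suc_iff f_def
    using step gle nn by (meson order_trans zero_less_Suc)
  obtain L where L: "f \<longlonglongrightarrow> L" "\<And>i. L \<le> f i"
    using decseq_convergent[OF dec, of 0] nn unfolding f_def by blast
  have "(\<lambda>n. f (Suc n)) \<longlonglongrightarrow> L" using L(1) by (rule LIMSEQ_Suc)
  moreover have "(\<lambda>n. g (f n)) \<longlonglongrightarrow> g L" unfolding g_def
    by (intro tendsto_intros L(1))
  moreover have "\<And>n. f (Suc n) \<le> g (f n)" unfolding f_def using step by simp
  ultimately have LgL: "L \<le> g L" by (intro LIMSEQ_le) auto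
  have L0: "0 \<le> L" using L(1) nn unfolding f_def by (intro LIMSEQ_le_const) auto
  have "L = 0"
  proof (rule ccontr)
    assume "L \<noteq> 0"
    hence "L > 0" using L0 by simp
    hence "\<alpha> * c * min L 1 > 0" using assms(1,5) by simp
    hence "g L < L" unfolding g_def using \<open>L > 0\<close> by auto
    thus False using LgL by simp
  qed
  hence "f \<longlonglongrightarrow> 0" using L(1) by simp
  hence "(\<lambda>n. p (Suc n)) \<longlonglongrightarrow> 0" unfolding f_def .
  hence "p \<longlonglongrightarrow> 0" by (rule LIMSEQ_imp_Suc)
  thus ?thesis unfolding p_def .
qed

end
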